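(* Let $\mathrm{IC}(\mathbf{a}_0,\dots,\mathbf{a}_{n-1})$ be an interval circulant matrix with $\hat A\ne0$. Then for every $A\in\mathrm{IC}(\mathbf{a}_0,\dots,\mathbf{a}_{n-1})$ we have $A/\lambda(A)\le\hat A/\lambda(\hat A)$ entrywise.
   Context: $\mathrm{Circ}(a_0,\dots,a_{n-1})$ is the matrix with $A_{i,j}=a_t$, $t\in\{0,\dots,n-1\}$, $t\equiv j-i\pmod n$. $\mathrm{IC}(\mathbf{a}_0,\dots,\mathbf{a}_{n-1})$ is the set of all $\mathrm{Circ}(a_0,\dots,a_{n-1})$ with $a_t\in\mathbf{a}_t$, where each $\mathbf{a}_t\subseteq\mathbb{R}_+$ is a nonempty interval of one of the forms $[\underline{a}_t,\overline{a}_t]$, $(\underline{a}_t,\overline{a}_t)$, $(\underline{a}_t,\overline{a}_t]$, $[\underline{a}_t,\overline{a}_t)$. $\underline{a}=\max_k\underline{a}_k$, $\hat A=\mathrm{Circ}(\hat a_0,\dots,\hat a_{n-1})$, $\hat a_i=\min\{\underline a,\overline a_i\}$. $\lambda(\cdot)$ is the greatest max-algebraic eigenvalue (maximum cycle geometric mean), which for a circulant equals its largest entry. *)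

theory Defs
  imports Complex_Main
begin

text \<open>n x n real matrices are represented as functions nat => nat => real,
  only the entries with indices < n being relevant.\<close>

definition circ :: "nat \<Rightarrow> (nat \<Rightarrow> real) \<Rightarrow> (nat \<Rightarrow> nat \<Rightarrow> real)" where
  "circ n a = (\<lambda>i j. a ((j + n - i) mod n))"

definition in_ivl :: "real \<Rightarrow> real \<Rightarrow> bool \<Rightarrow> bool \<Rightarrow> real \<Rightarrow> bool" where
  "in_ivl lo hi lc hc x \<longleftrightarrow>
     (if lc then lo \<le> x else lo < x) \<and> (if hc then x \<le> hi else x < hi)"

definition valid_ivl :: "real \<Rightarrow> real \<Rightarrow> bool \<Rightarrow> bool \<Rightarrow> bool" where
  "valid_ivl lo hi lc hc \<longleftrightarrow> 0 \<le> lo \<and> (\<exists>x. in_ivl lo hi lc hc x)"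

definition IC :: "nat \<Rightarrow> (nat \<Rightarrow> real) \<Rightarrow> (nat \<Rightarrow> real) \<Rightarrow> (nat \<Rightarrow> bool) \<Rightarrow> (nat \<Rightarrow> bool)
                  \<Rightarrow> (nat \<Rightarrow> nat \<Rightarrow> real) set" where
  "IC n lo hi lc hc = {circ n a | a. \<forall>t<n. in_ivl (lo t) (hi t) (lc t) (hc t) (a t)}"

definition lower_max :: "nat \<Rightarrow> (nat \<Rightarrow> real) \<Rightarrow> real" where
  "lower_max n lo = Max (lo ` {..<n})"

definition hatA :: "nat \<Rightarrow> (nat \<Rightarrow> real) \<Rightarrow> (nat \<Rightarrow> real) \<Rightarrow> (nat \<Rightarrow> nat \<Rightarrow> real)" where
  "hatA n lo hi = circ n (\<lambda>i. min (lower_max n lo) (hi i))"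

definition cycle_weight :: "(nat \<Rightarrow> nat \<Rightarrow> real) \<Rightarrow> nat list \<Rightarrow> real" where
  "cycle_weight A xs = (\<Prod>l<length xs. A (xs ! l) (xs ! ((l + 1) mod length xs)))"

text \<open>Max-algebraic principal eigenvalue = maximum cycle geometric mean
  (cycles of length at most n suffice).\<close>
definition mcgm :: "nat \<Rightarrow> (nat \<Rightarrow> nat \<Rightarrow> real) \<Rightarrow> real" where
  "mcgm n A = Max {root (length xs) (cycle_weight A xs) | xs.
                     1 \<le> length xs \<and> length xs \<le> n \<and> set xs \<subseteq> {..<n}}"

end

theory Submission
  imports Defs
begin

lemma circ_entry:
  assumes "0 < n" "t < n"
  shows "circ n a (x mod n) ((x + t) mod n) = a t"
proof -
  have "((x + t) mod n + n - x mod n) mod n = t"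
  proof -
    have lt: "x mod n < n" using assms by simp
    have "int (((x + t) mod n + n - x mod n) mod n)
        = (int ((x + t) mod n) + int n - int (x mod n)) mod int n"
      using lt by (simp add: of_nat_mod of_nat_diff)
    also have "\<dots> = (int x + int t + int n - int x) mod int n"
      by (metis (no_types, opaque_lifting) mod_diff_left_eq mod_diff_right_eq mod_add_left_eq
          of_nat_add of_nat_mod)
    also have "\<dots> = int t" using assms by simp
    finally show ?thesis by linarith
  qed
  thus ?thesis by (simp add: circ_def)
qed

lemma circ_range:
  assumes "0 < n"
  shows "circ n a i j \<in> a ` {..<n}"
  using assms by (simp add: circ_def)

lemma mcgm_finite:
  "finite {root (length xs) (cycle_weight A xs) | xs.
             1 \<le> length xs \<and> length xs \<le> n \<and> set xs \<subseteq> {..<n}}"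
proof -
  have "finite {xs. set xs \<subseteq> {..<n} \<and> length xs \<le> n}"
    by (rule finite_lists_length_le) simp
  then have "finite ((\<lambda>xs. root (length xs) (cycle_weight A xs)) `
     {xs. set xs \<subseteq> {..<n} \<and> length xs \<le> n})" by simp
  then show ?thesis
    by (rule rev_finite_subset) auto
qed

lemma mcgm_ge:
  assumes "0 < n" "t < n" "0 \<le> a t"
  shows "a t \<le> mcgm n (circ n a)"
proof -
  define xs where "xs = map (\<lambda>k. (k * t) mod n) [0..<n]"
  have len: "length xs = n" by (simp add: xs_def)
  have w: "cycle_weight (circ n a) xs = a t ^ n"
  proof -
    have "\<And>l. l < n \<Longrightarrow> circ n a (xs ! l) (xs ! ((l + 1) mod n)) = a t"
    proof -
      fix l assume l: "l < n"
      have "xs ! ((l + 1) mod n) = (((l + 1) mod n) * t) mod n"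
        using assms(1) by (simp add: xs_def)
      also have "\<dots> = (l * t + t) mod n"
        by (metis mod_mult_left_eq add.commute mult_Suc Suc_eq_plus1)
      finally have "xs ! ((l + 1) mod n) = (l * t + t) mod n" .
      moreover have "xs ! l = (l * t) mod n" using l by (simp add: xs_def)
      ultimately show "circ n a (xs ! l) (xs ! ((l + 1) mod n)) = a t"
        using circ_entry[OF assms(1,2), of a "l*t"] by simp
    qed
    then show ?thesis unfolding cycle_weight_def len by simp
  qed
  have "root n (a t ^ n) = a t" using assms by (simp add: real_root_power_cancel)
  then have "a t \<in> {root (length xs) (cycle_weight (circ n a) xs) | xs.
             1 \<le> length xs \<and> length xs \<le> n \<and> set xs \<subseteq> {..<n}}"
    using len w assms(1) by (auto simp: xs_def intro!: exI[of _ xs])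
  then show ?thesis unfolding mcgm_def using mcgm_finite by (rule Max_ge[rotated])
qed

lemma mcgm_le:
  assumes "0 < n" "\<forall>t<n. 0 \<le> a t \<and> a t \<le> M" "0 \<le> M"
  shows "mcgm n (circ n a) \<le> M"
proof -
  have ex: "\<exists>xs. 1 \<le> length xs \<and> length xs \<le> n \<and> set xs \<subseteq> {..<(n::nat)}"
    using assms(1) by (intro exI[of _ "[0]"]) auto
  have ent: "\<And>i j. 0 \<le> circ n a i j \<and> circ n a i j \<le> M"
  proof -
    fix i j
    obtain s where "s < n" "circ n a i j = a s" using circ_range[OF assms(1), of a i j] by auto
    then show "0 \<le> circ n a i j \<and> circ n a i j \<le> M" using assms(2) by simp
  qed
  show ?thesis unfolding mcgm_def
  proof (subst Max_le_iff[OF mcgm_finite])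
    show "{root (length xs) (cycle_weight (circ n a) xs) | xs.
             1 \<le> length xs \<and> length xs \<le> n \<and> set xs \<subseteq> {..<n}} \<noteq> {}"
      using ex by blast
    show "\<forall>x\<in>{root (length xs) (cycle_weight (circ n a) xs) | xs.
             1 \<le> length xs \<and> length xs \<le> n \<and> set xs \<subseteq> {..<n}}. x \<le> M"
    proof clarify
      fix xs :: "nat list" assume h: "1 \<le> length xs" "length xs \<le> n" "set xs \<subseteq> {..<n}"
      have "cycle_weight (circ n a) xs \<le> (\<Prod>l<length xs. M)"
        unfolding cycle_weight_def using ent by (intro prod_mono) auto
      then have c: "cycle_weight (circ n a) xs \<le> M ^ length xs" by simp
      have c0: "0 \<le> cycle_weight (circ n a) xs"
        unfolding cycle_weight_def using ent by (intro prod_nonneg) auto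
      have "root (length xs) (cycle_weight (circ n a) xs) \<le> root (length xs) (M ^ length xs)"
        using h c by (intro real_root_le_mono) auto
      also have "\<dots> = M" using h assms(3) by (intro real_root_power_cancel) auto
      finally show "root (length xs) (cycle_weight (circ n a) xs) \<le> M" .
    qed
  qed
qed

theorem lemma4:
  fixes n :: nat and lo hi :: "nat \<Rightarrow> real" and lc hc :: "nat \<Rightarrow> bool"
    and A :: "nat \<Rightarrow> nat \<Rightarrow> real"
  assumes ivls: "\<forall>t<n. valid_ivl (lo t) (hi t) (lc t) (hc t)"
    and nonzero: "\<exists>i<n. \<exists>j<n. hatA n lo hi i j \<noteq> 0"
    and A: "A \<in> IC n lo hi lc hc"
  shows "\<forall>i<n. \<forall>j<n. A i j / mcgm n A \<le> hatA n lo hi i j / mcgm n (hatA n lo hi)"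
proof (intro allI impI)
  fix i j assume i: "i < n" and j: "j < n"
  have n: "0 < n" using i by simp
  obtain a where Aa: "A = circ n a" and a: "\<forall>t<n. in_ivl (lo t) (hi t) (lc t) (hc t) (a t)"
    using A unfolding IC_def by blast
  define L where "L = lower_max n lo"
  have lohi: "\<forall>t<n. 0 \<le> lo t \<and> lo t \<le> hi t"
  proof (intro allI impI)
    fix t assume t: "t < n"
    then obtain x where "in_ivl (lo t) (hi t) (lc t) (hc t) x" "0 \<le> lo t"
      using ivls unfolding valid_ivl_def by blast
    then show "0 \<le> lo t \<and> lo t \<le> hi t" unfolding in_ivl_def by (auto split: if_splits)
  qed
  have abnd: "\<forall>t<n. lo t \<le> a t \<and> a t \<le> hi t"
    using a unfolding in_ivl_def by (auto split: if_splits)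
  have fin: "finite (lo ` {..<n})" and ne: "lo ` {..<n} \<noteq> {}" using n by auto
  have Lge: "\<forall>t<n. lo t \<le> L" unfolding L_def lower_max_def using fin by auto
  obtain k where k: "k < n" "lo k = L"
    using Max_in[OF fin ne] unfolding L_def lower_max_def by auto
  have L0: "0 \<le> L" using k lohi by auto
  define ah where "ah = (\<lambda>t. min L (hi t))"
  have H: "hatA n lo hi = circ n ah" unfolding hatA_def ah_def L_def by simp
  have ahb: "\<forall>t<n. 0 \<le> ah t \<and> ah t \<le> L" unfolding ah_def using L0 lohi Lge by force
  have ahk: "ah k = L" unfolding ah_def using k lohi by auto
  have mH: "mcgm n (hatA n lo hi) = L"
    using mcgm_le[OF n ahb L0] mcgm_ge[OF n k(1), of ah] ahk L0 H by auto
  have Lpos: "0 < L"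
  proof -
    obtain i' j' where "hatA n lo hi i' j' \<noteq> 0" using nonzero by blast
    moreover have "hatA n lo hi i' j' \<in> ah ` {..<n}" using H circ_range[OF n] by simp
    ultimately show ?thesis using ahb L0 by force
  qed
  define t where "t = (j + n - i) mod n"
  have t: "t < n" using n by (simp add: t_def)
  have Aij: "A i j = a t" and Hij: "hatA n lo hi i j = ah t"
    by (simp_all add: Aa H circ_def t_def)
  define m where "m = mcgm n A"
  have m1: "a t \<le> m" using mcgm_ge[OF n t, of a] abnd lohi t Aa m_def by force
  have m2: "L \<le> m" using mcgm_ge[OF n k(1), of a] abnd lohi k Aa m_def by force
  have at0: "0 \<le> a t" using abnd lohi t by force
  have mpos: "0 < m" using m2 Lpos by simp
  show "A i j / mcgm n A \<le> hatA n lo hi i j / mcgm n (hatA n lo hi)"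
    unfolding Aij Hij mH m_def[symmetric]
  proof (cases "L \<le> hi t")
    case True
    then have "ah t / L = 1" using Lpos by (simp add: ah_def)
    moreover have "a t / m \<le> 1" using m1 mpos by simp
    ultimately show "a t / m \<le> ah t / L" by simp
  next
    case False
    then have "ah t = hi t" by (simp add: ah_def)
    moreover have "a t / m \<le> hi t / m" using abnd t mpos by (simp add: divide_right_mono)
    moreover have "hi t / m \<le> hi t / L"
      using Lpos m2 lohi t by (intro divide_left_mono) (auto intro: mult_pos_pos)
    ultimately show "a t / m \<le> ah t / L" by simp
  qed
qed

end
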